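(* Let $k$ be a positive integer. For any approval-dependent scoring rule $f$ and any instance $\mathcal{I}_{m,\mathcal{A}_n,k}$ in which some item has positive score, $P(\mathcal{I}_{m,\mathcal{A}_n,k},f)\le k$; hence $P(k,f)\le k$. Moreover, this bound is attained for certain approval-dependent scoring rules: in particular, for maximin diverse approval $f_{DA}$ with $\gamma>1$ groups, $P(k,f_{DA})=k$.
   Context: An instance $\mathcal{I}_{m,\mathcal{A}_n,k}=\langle m,\mathcal{A}_n,k\rangle$ consists of items $[m]$, users $[n]$, an approval profile $\mathcal{A}_n=(A_1,\dots,A_n)$ with $A_u\subseteq[m]$, and a target size $k\le m$. A scoring rule assigns each item $i$ a score $f(i,\mathcal{A}_n)\ge0$, additive over sets: $f(S)=\sum_{i\in S}f(i,\mathcal{A}_n)$. The rule is approval-dependent if $f(i,\mathcal{A}_n)=0$ for every item $i\notin\bigcup_{u=1}^nA_u$. Maximin diverse approval: users are partitioned into $\gamma$ nonempty groups $G_1,\dots,G_\gamma$ and $f_{DA}(i,\mathcal{A}_n)=\min_{g\in[\gamma]}\frac{1}{|G_g|}|\{u\in G_g: i\in A_u\}|$. A group $G\subseteq[n]$ is cohesive if $\bigcap_{u\in G}A_u\ne\emptyset$; $S$ represents $G$ if some $u\in G$ has $A_u\cap S\ne\emptyset$; $S$ satisfies justified representation (JR) if $|S|=k$ and $S$ represents every cohesive group of at least $n/k$ users. $S^*$ maximizes $f(S)$ over $|S|=k$; $S^*_{JR}$ maximizes $f(S)$ over sets satisfying JR. The price of JR is $P(\mathcal{I}_{m,\mathcal{A}_n,k},f)=f(S^*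 )/f(S^*_{JR})$ and $P(k,f)=\max_{\mathcal{I}_{m,\mathcal{A}_n,k}}P(\mathcal{I}_{m,\mathcal{A}_n,k},f)$ over all instances with set size $k$ (for $f_{DA}$, instances include the group partition). *)

theory Defs
  imports Complex_Main
begin

text \<open>Items are {..<m}, users are {..<n}; an approval profile is A :: nat => nat set,
  of which only A 0, ..., A (n-1) are relevant. A scoring rule is a function
  f m n A i giving the score of item i in the instance with m items, n users, profile A.\<close>

type_synonym profile = "nat \<Rightarrow> nat set"
type_synonym scoring_rule = "nat \<Rightarrow> nat \<Rightarrow> profile \<Rightarrow> nat \<Rightarrow> real"

definition valid_instance :: "nat \<Rightarrow> nat \<Rightarrow> profile \<Rightarrow> nat \<Rightarrow> bool" where
  "valid_instance m n A k \<longleftrightarrow> k \<le> m \<and> (\<forall>u<n. A u \<subseteq> {..<m})"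

definition nonneg_rule :: "scoring_rule \<Rightarrow> bool" where
  "nonneg_rule f \<longleftrightarrow> (\<forall>m n A i. 0 \<le> f m n A i)"

definition approval_dependent :: "scoring_rule \<Rightarrow> bool" where
  "approval_dependent f \<longleftrightarrow>
     (\<forall>m n A i. i \<notin> (\<Union>u\<in>{..<n}. A u) \<longrightarrow> f m n A i = 0)"

definition set_score :: "scoring_rule \<Rightarrow> nat \<Rightarrow> nat \<Rightarrow> profile \<Rightarrow> nat set \<Rightarrow> real" where
  "set_score f m n A S = (\<Sum>i\<in>S. f m n A i)"

definition cohesive :: "nat \<Rightarrow> profile \<Rightarrow> nat set \<Rightarrow> bool" where
  "cohesive n A G \<longleftrightarrow> G \<subseteq> {..<n} \<and> (\<Inter>u\<in>G. A u) \<noteq> {}"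

definition represents :: "profile \<Rightarrow> nat set \<Rightarrow> nat set \<Rightarrow> bool" where
  "represents A S G \<longleftrightarrow> (\<exists>u\<in>G. A u \<inter> S \<noteq> {})"

definition satisfies_JR :: "nat \<Rightarrow> nat \<Rightarrow> profile \<Rightarrow> nat \<Rightarrow> nat set \<Rightarrow> bool" where
  "satisfies_JR m n A k S \<longleftrightarrow> S \<subseteq> {..<m} \<and> card S = k \<and>
     (\<forall>G. cohesive n A G \<and> real (card G) \<ge> real n / real k \<longrightarrow> represents A S G)"

definition opt_score :: "scoring_rule \<Rightarrow> nat \<Rightarrow> nat \<Rightarrow> profile \<Rightarrow> nat \<Rightarrow> real" where
  "opt_score f m n A k = Max {set_score f m n A S | S. S \<subseteq> {..<m} \<and> card S = k}"

definition opt_JR_score :: "scoring_rule \<Rightarrow> nat \<Rightarrow> nat \<Rightarrow> profile \<Rightarrow> nat \<Rightarrow> real" where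
  "opt_JR_score f m n A k = Max {set_score f m n A S | S. satisfies_JR m n A k S}"

definition price_of_JR :: "scoring_rule \<Rightarrow> nat \<Rightarrow> nat \<Rightarrow> profile \<Rightarrow> nat \<Rightarrow> real" where
  "price_of_JR f m n A k = opt_score f m n A k / opt_JR_score f m n A k"

text \<open>Group partitions: grp u \<in> {..<\<gamma>} is the group of user u; group g is
  G_g = {u<n. grp u = g}; all groups nonempty.\<close>

definition group_partition :: "nat \<Rightarrow> nat \<Rightarrow> (nat \<Rightarrow> nat) \<Rightarrow> bool" where
  "group_partition n \<gamma> grp \<longleftrightarrow> (\<forall>u<n. grp u < \<gamma>) \<and> (\<forall>g<\<gamma>. \<exists>u<n. grp u = g)"

definition f_DA :: "nat \<Rightarrow> (nat \<Rightarrow> nat) \<Rightarrow> scoring_rule" where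
  "f_DA \<gamma> grp m n A i =
     Min ((\<lambda>g. real (card {u\<in>{..<n}. grp u = g \<and> i \<in> A u}) / real (card {u\<in>{..<n}. grp u = g}))
          ` {..<\<gamma>})"

definition DA_prices :: "nat \<Rightarrow> nat \<Rightarrow> real set" where
  "DA_prices k \<gamma> = {price_of_JR (f_DA \<gamma> grp) m n A k | m n A grp.
      valid_instance m n A k \<and> group_partition n \<gamma> grp \<and> (\<exists>i<m. f_DA \<gamma> grp m n A i > 0)}"

end

theory Submission
  imports Defs
begin


definition goodS :: "nat \<Rightarrow> profile \<Rightarrow> nat \<Rightarrow> nat set \<Rightarrow> bool" where
  "goodS n A k S \<longleftrightarrow> (\<forall>G. cohesive n A G \<and> real (card G) \<ge> real n / real k \<longrightarrow> represents A S G)"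

definition covS :: "nat \<Rightarrow> profile \<Rightarrow> nat set \<Rightarrow> nat set" where
  "covS n A S = {u\<in>{..<n}. A u \<inter> S \<noteq> {}}"

lemma good_mono: "goodS n A k S \<Longrightarrow> S \<subseteq> T \<Longrightarrow> goodS n A k T"
  unfolding goodS_def represents_def by blast

lemma greedy:
  assumes val: "valid_instance m n A k" and k: "k \<ge> 1"
    and u0: "u0 < n" "istar \<in> A u0"
  shows "j < k \<Longrightarrow> \<exists>S. S \<subseteq> {..<m} \<and> card S = Suc j \<and> istar \<in> S \<and>
     (goodS n A k S \<or> real (card (covS n A S)) \<ge> 1 + real j * real n / real k)"
proof (induction j)
  case 0
  have im: "istar < m" using val u0 unfolding valid_instance_def by auto
  have "u0 \<in> covS n A {istar}" using u0 unfolding covS_def by auto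
  moreover have "finite (covS n A {istar})" unfolding covS_def by auto
  ultimately have "card (covS n A {istar}) \<ge> 1"
    by (metis One_nat_def Suc_leI card_gt_0_iff empty_iff)
  then show ?case using im by (intro exI[of _ "{istar}"]) auto
next
  case (Suc j)
  then obtain S where S: "S \<subseteq> {..<m}" "card S = Suc j" "istar \<in> S"
     "goodS n A k S \<or> real (card (covS n A S)) \<ge> 1 + real j * real n / real k" by auto
  have fS: "finite S" using S(1) finite_subset by blast
  show ?case
  proof (cases "goodS n A k S")
    case True
    have km: "k \<le> m" using val unfolding valid_instance_def by auto
    have "\<not> {..<m} \<subseteq> S"
    proof
      assume "{..<m} \<subseteq> S"
      then have "card {..<m} \<le> card S" using fS card_mono by blast
      then show False using S(2) Suc.prems km by simp
    qed
    then obtain x where x: "x < m" "x \<notin> S" by auto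
    show ?thesis
      apply (rule exI[of _ "insert x S"])
      using S x fS good_mono[OF True, of "insert x S"] by auto
  next
    case False
    then have cov: "real (card (covS n A S)) \<ge> 1 + real j * real n / real k" using S(4) by auto
    from False obtain G where G: "cohesive n A G" "real (card G) \<ge> real n / real k"
      "\<not> represents A S G" unfolding goodS_def by auto
    have Gn: "G \<subseteq> {..<n}" using G(1) unfolding cohesive_def by auto
    have fG: "finite G" using Gn finite_subset by blast
    have "real n / real k > 0" using u0 k by auto
    then have "card G > 0" using G(2) by linarith
    then obtain u1 where u1: "u1 \<in> G" by (metis card_gt_0_iff ex_in_conv)
    from G(1) obtain c where c: "c \<in> (\<Inter>u\<in>G. A u)" unfolding cohesive_def by auto
    have cm: "c < m" using c u1 Gn val unfolding valid_instance_def by auto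
    have dis: "\<forall>u\<in>G. A u \<inter> S = {}" using G(3) unfolding represents_def by auto
    have cS: "c \<notin> S" using dis c u1 by auto
    have sub: "covS n A S \<union> G \<subseteq> covS n A (insert c S)"
      using Gn c unfolding covS_def by auto
    have disj: "covS n A S \<inter> G = {}" using dis unfolding covS_def by auto
    have fc: "finite (covS n A (insert c S))" unfolding covS_def by auto
    have "card (covS n A S) + card G = card (covS n A S \<union> G)"
      using disj fG by (simp add: card_Un_disjoint covS_def)
    also have "\<dots> \<le> card (covS n A (insert c S))" using sub fc card_mono by blast
    finally have "real (card (covS n A S)) + real (card G) \<le> real (card (covS n A (insert c S)))"
      by linarith
    then have "real (card (covS n A (insert c S))) \<ge> 1 + real (Suc j) * real n / real k"
      using cov G(2) by (simp add: field_simps add_divide_distrib)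
    then show ?thesis
      apply (intro exI[of _ "insert c S"])
      using S cm cS fS by auto
  qed
qed

lemma exists_JR:
  assumes val: "valid_instance m n A k" and k: "k \<ge> 1"
    and u0: "u0 < n" "istar \<in> A u0"
  shows "\<exists>S. satisfies_JR m n A k S \<and> istar \<in> S"
proof -
  obtain S where S: "S \<subseteq> {..<m}" "card S = k" "istar \<in> S"
     "goodS n A k S \<or> real (card (covS n A S)) \<ge> 1 + real (k-1) * real n / real k"
    using greedy[OF val k u0, of "k-1"] k by auto
  have "goodS n A k S"
  proof (rule ccontr)
    assume ng: "\<not> goodS n A k S"
    then have cov: "real (card (covS n A S)) \<ge> 1 + real (k-1) * real n / real k" using S(4) by auto
    from ng obtain G where G: "cohesive n A G" "real (card G) \<ge> real n / real k"
      "\<not> represents A S G" unfolding goodS_def by auto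
    have Gn: "G \<subseteq> {..<n}" using G(1) unfolding cohesive_def by auto
    have fG: "finite G" using Gn finite_subset by blast
    have dis: "\<forall>u\<in>G. A u \<inter> S = {}" using G(3) unfolding represents_def by auto
    have disj: "covS n A S \<inter> G = {}" using dis unfolding covS_def by auto
    have "card (covS n A S) + card G = card (covS n A S \<union> G)"
      using disj fG by (simp add: card_Un_disjoint covS_def)
    also have "\<dots> \<le> card {..<n}" using Gn by (intro card_mono) (auto simp: covS_def)
    finally have "real (card (covS n A S)) + real (card G) \<le> real n" by simp
    moreover have "1 + real (k-1) * real n / real k + real n / real k = 1 + real n"
      using k by (simp add: field_simps of_nat_diff)
    ultimately show False using cov G(2) by linarith
  qed
  then show ?thesis using S unfolding satisfies_JR_def goodS_def by auto
qed



lemma opt_le: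
  assumes nn: "nonneg_rule f" and val: "valid_instance m n A k" and m: "m > 0"
  shows "opt_score f m n A k \<le> real k * Max (f m n A ` {..<m})"
proof -
  let ?M = "Max (f m n A ` {..<m})"
  have fin: "finite {set_score f m n A S | S. S \<subseteq> {..<m} \<and> card S = k}"
  proof -
    have "{set_score f m n A S | S. S \<subseteq> {..<m} \<and> card S = k} \<subseteq> set_score f m n A ` Pow {..<m}"
      by auto
    then show ?thesis using finite_subset by blast
  qed
  have km: "k \<le> m" using val unfolding valid_instance_def by auto
  have "card {..<k} = k" by simp
  then have ne: "{set_score f m n A S | S. S \<subseteq> {..<m} \<and> card S = k} \<noteq> {}" using km
  proof -
    have "set_score f m n A {..<k} \<in> {set_score f m n A S | S. S \<subseteq> {..<m} \<and> card S = k}"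
      using km by auto
    then show ?thesis by blast
  qed
  have "\<forall>x\<in>{set_score f m n A S | S. S \<subseteq> {..<m} \<and> card S = k}. x \<le> real k * ?M"
  proof
    fix x assume "x \<in> {set_score f m n A S | S. S \<subseteq> {..<m} \<and> card S = k}"
    then obtain S where S: "S \<subseteq> {..<m}" "card S = k" "x = set_score f m n A S" by auto
    have "x = (\<Sum>i\<in>S. f m n A i)" using S unfolding set_score_def by simp
    also have "\<dots> \<le> (\<Sum>i\<in>S. ?M)" using S(1) by (intro sum_mono Max_ge) auto
    also have "\<dots> = real k * ?M" using S(2) by simp
    finally show "x \<le> real k * ?M" .
  qed
  then show ?thesis unfolding opt_score_def using fin ne by (simp add: Max_le_iff)
qed

lemma fin_JR: "finite {set_score f m n A S | S. satisfies_JR m n A k S}"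
proof -
  have "{set_score f m n A S | S. satisfies_JR m n A k S} \<subseteq> set_score f m n A ` Pow {..<m}"
    unfolding satisfies_JR_def by auto
  then show ?thesis using finite_subset by blast
qed

lemma optJR_ge:
  assumes nn: "nonneg_rule f" and ad: "approval_dependent f" and val: "valid_instance m n A k"
    and k: "k \<ge> 1" and pos: "\<exists>i<m. f m n A i > 0"
  shows "opt_JR_score f m n A k \<ge> Max (f m n A ` {..<m}) \<and> Max (f m n A ` {..<m}) > 0"
proof -
  let ?M = "Max (f m n A ` {..<m})"
  from pos obtain i where i: "i < m" "f m n A i > 0" by auto
  have "?M \<in> f m n A ` {..<m}" using i by (intro Max_in) auto
  then obtain ist where ist: "ist < m" "f m n A ist = ?M" by auto
  have "?M \<ge> f m n A i" using i by (intro Max_ge) auto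
  then have Mp: "?M > 0" using i by linarith
  have "ist \<in> (\<Union>u\<in>{..<n}. A u)"
  proof (rule ccontr)
    assume "ist \<notin> (\<Union>u\<in>{..<n}. A u)"
    then have "f m n A ist = 0" using ad unfolding approval_dependent_def by blast
    then show False using Mp ist by simp
  qed
  then obtain u0 where u0: "u0 < n" "ist \<in> A u0" by auto
  obtain S where S: "satisfies_JR m n A k S" "ist \<in> S" using exists_JR[OF val k u0] by auto
  have fS: "finite S" using S(1) finite_subset unfolding satisfies_JR_def by blast
  have "?M \<le> set_score f m n A S" unfolding set_score_def
    using ist S(2) fS nn unfolding nonneg_rule_def
    by (metis member_le_sum)
  also have "\<dots> \<le> opt_JR_score f m n A k" unfolding opt_JR_score_def
    using S(1) fin_JR by (intro Max_ge) auto
  finally show ?thesis using Mp by simp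
qed

lemma part1:
  assumes nn: "nonneg_rule f" and ad: "approval_dependent f" and val: "valid_instance m n A k"
    and k: "k \<ge> 1" and pos: "\<exists>i<m. f m n A i > 0"
  shows "price_of_JR f m n A k \<le> real k"
proof -
  let ?M = "Max (f m n A ` {..<m})"
  have m: "m > 0" using pos by auto
  have a: "opt_score f m n A k \<le> real k * ?M" using opt_le[OF nn val m] .
  have b: "opt_JR_score f m n A k \<ge> ?M" "?M > 0" using optJR_ge[OF nn ad val k pos] by auto
  have "real k * ?M \<le> real k * opt_JR_score f m n A k" using b by (intro mult_left_mono) auto
  then show ?thesis unfolding price_of_JR_def using a b
    by (simp add: divide_le_eq)
qed



lemma DA_nonneg: assumes g0: "\<gamma> > 0" shows "nonneg_rule (f_DA \<gamma> grp)"
  unfolding nonneg_rule_def f_DA_def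
proof (intro allI)
  fix m n A i
  show "0 \<le> Min ((\<lambda>g. real (card {u\<in>{..<n}. grp u = g \<and> i \<in> A u}) / real (card {u\<in>{..<n}. grp u = g})) ` {..<\<gamma>})"
  proof (cases "\<gamma> = 0")
    case True then show ?thesis using \<open>\<gamma> > 0\<close> by simp
  next
    case False then show ?thesis by (subst Min_ge_iff) auto
  qed
qed

lemma DA_appdep: assumes g0: "\<gamma> > 0" shows "approval_dependent (f_DA \<gamma> grp)"
  unfolding approval_dependent_def
proof (intro allI impI)
  fix m n :: nat and A :: profile and i :: nat assume "i \<notin> (\<Union>u\<in>{..<n}. A u)"
  then have e: "\<And>g. {u\<in>{..<n::nat}. grp u = g \<and> i \<in> A u} = {}" by auto
  show "f_DA \<gamma> grp m n A i = 0" unfolding f_DA_def e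
  proof -
    have "(\<lambda>x. 0::real) ` {..<\<gamma>} = {0}" using g0 by auto
    then show "(MIN x\<in>{..<\<gamma>}. real (card ({}::nat set)) / real (card {u \<in> {..<n}. grp u = x})) = 0" by simp
  qed
qed

definition gA :: "nat \<Rightarrow> nat \<Rightarrow> profile" where
  "gA \<gamma> k u = (if u < \<gamma> then {..<k} else {k + (u-\<gamma>) div \<gamma>})"

definition gG :: "nat \<Rightarrow> nat \<Rightarrow> nat" where
  "gG \<gamma> u = (if u < \<gamma> then u else 0)"

lemma blk_div: assumes "\<gamma> > 0" "u \<in> {\<gamma> + j*\<gamma> ..< \<gamma> + (Suc j)*\<gamma>}"
  shows "(u - \<gamma>) div \<gamma> = j"
proof -
  obtain r where r: "u = \<gamma> + j*\<gamma> + r" "r < \<gamma>" using assms(2)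
    by (metis atLeastLessThan_iff le_Suc_ex add.assoc mult_Suc add_less_cancel_left add.commute)
  then have "u - \<gamma> = r + j * \<gamma>" by simp
  then show ?thesis using r(2) assms(1) by simp
qed

lemma part2_instance:
  assumes k: "k \<ge> 1" and g: "\<gamma> > 1"
  shows "real k \<in> DA_prices k \<gamma>"
proof -
  define n where "n = k * \<gamma>"
  define m where "m = 2*k - 1"
  define A where "A = gA \<gamma> k"
  define grp where "grp = gG \<gamma>"
  define F where "F = f_DA \<gamma> grp m n A"
  have g0: "\<gamma> > 0" using g by simp
  have gn: "\<gamma> \<le> n" unfolding n_def using k by simp
  have val: "valid_instance m n A k"
    unfolding valid_instance_def
  proof (intro conjI allI impI)
    show "k \<le> m" unfolding m_def using k by simp
    fix u assume u: "u < n"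
    show "A u \<subseteq> {..<m}"
    proof (cases "u < \<gamma>")
      case True then show ?thesis unfolding A_def gA_def m_def using k by auto
    next
      case False
      have "u - \<gamma> < (k - 1) * \<gamma>" using u False unfolding n_def
        by (simp add: diff_mult_distrib)
      then have "(u - \<gamma>) div \<gamma> < k - 1" using g0
        by (simp add: div_less_iff_less_mult)
      then show ?thesis using False unfolding A_def gA_def m_def by auto
    qed
  qed
  have gp: "group_partition n \<gamma> grp"
    unfolding group_partition_def grp_def gG_def using g0 gn
    by (auto intro!: exI[where x = "_ :: nat"])
  have appr: "\<And>i u. i < k \<Longrightarrow> (i \<in> A u) = (u < \<gamma>)"
    unfolding A_def gA_def by auto
  have Fk: "\<And>i. i < k \<Longrightarrow> F i = F 0"
  proof -
    fix i assume i: "i < k"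
    have "\<And>u. (i \<in> A u) = (0 \<in> A u)" using appr[OF i] appr[of 0] k by auto
    then show "F i = F 0" unfolding F_def f_DA_def by simp
  qed
  have F0: "F 0 > 0"
    unfolding F_def f_DA_def
  proof (subst Min_gr_iff)
    show "finite ((\<lambda>g. real (card {u \<in> {..<n}. grp u = g \<and> 0 \<in> A u}) / real (card {u \<in> {..<n}. grp u = g})) ` {..<\<gamma>})" by simp
    show "(\<lambda>g. real (card {u \<in> {..<n}. grp u = g \<and> 0 \<in> A u}) / real (card {u \<in> {..<n}. grp u = g})) ` {..<\<gamma>} \<noteq> {}" using g0 by auto
    show "\<forall>a\<in>(\<lambda>g. real (card {u \<in> {..<n}. grp u = g \<and> 0 \<in> A u}) / real (card {u \<in> {..<n}. grp u = g})) ` {..<\<gamma>}. 0 < a"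
    proof
      fix a assume "a \<in> (\<lambda>g. real (card {u \<in> {..<n}. grp u = g \<and> 0 \<in> A u}) / real (card {u \<in> {..<n}. grp u = g})) ` {..<\<gamma>}"
      then obtain g where gg: "g < \<gamma>" and a: "a = real (card {u \<in> {..<n}. grp u = g \<and> 0 \<in> A u}) / real (card {u \<in> {..<n}. grp u = g})" by auto
      have m1: "g \<in> {u \<in> {..<n}. grp u = g \<and> 0 \<in> A u}" using gg gn k appr[of 0 g]
        unfolding grp_def gG_def by auto
      have m2: "g \<in> {u \<in> {..<n}. grp u = g}" using m1 by auto
      have "card {u \<in> {..<n}. grp u = g \<and> 0 \<in> A u} > 0" using m1 by (auto simp: card_gt_0_iff)
      moreover have "card {u \<in> {..<n}. grp u = g} > 0" using m2 by (auto simp: card_gt_0_iff)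
      ultimately show "0 < a" unfolding a by simp
    qed
  qed
  have Fbig: "\<And>i. i \<ge> k \<Longrightarrow> F i = 0"
  proof -
    fix i assume i: "i \<ge> k"
    have e: "{u \<in> {..<n}. grp u = 1 \<and> i \<in> A u} = {}"
      using i unfolding grp_def gG_def A_def gA_def by (auto split: if_splits)
    have "F i \<le> 0" unfolding F_def f_DA_def
      apply (rule Min_le_iff[THEN iffD2])
        apply simp
       using g apply auto[1]
      apply (rule bexI[of _ 0])
       apply simp
      apply (rule image_eqI[of _ _ 1])
      using e apply simp
      using g by simp
    moreover have "F i \<ge> 0" using DA_nonneg[OF g0] unfolding F_def nonneg_rule_def by blast
    ultimately show "F i = 0" by simp
  qed
  have pos: "\<exists>i<m. F i > 0" using F0 k unfolding m_def by (intro exI[of _ 0]) auto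
  have MaxF: "Max (F ` {..<m}) = F 0"
  proof (rule Max_eqI)
    show "finite (F ` {..<m})" by simp
    show "F 0 \<in> F ` {..<m}" using k unfolding m_def by auto
    fix y assume "y \<in> F ` {..<m}"
    then obtain i where yi: "y = F i" by auto
    show "y \<le> F 0"
    proof (cases "i < k")
      case True then show ?thesis using Fk[OF True] yi by simp
    next
      case False then show ?thesis using Fbig[of i] F0 yi by simp
    qed
  qed
  define f where "f = f_DA \<gamma> grp"
  have Ff: "\<And>i. f m n A i = F i" unfolding f_def F_def by simp
  have opt: "opt_score f m n A k = real k * F 0"
  proof (rule antisym)
    have m0: "m > 0" using pos by auto
    have "opt_score f m n A k \<le> real k * Max (f m n A ` {..<m})"
      unfolding f_def by (rule opt_le[OF DA_nonneg[OF g0] val m0])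
    moreover have "f m n A = F" using Ff by auto
    ultimately show "opt_score f m n A k \<le> real k * F 0" using MaxF by simp
    have fin: "finite {set_score f m n A S | S. S \<subseteq> {..<m} \<and> card S = k}"
    proof -
      have "{set_score f m n A S | S. S \<subseteq> {..<m} \<and> card S = k} \<subseteq> set_score f m n A ` Pow {..<m}"
        by auto
      then show ?thesis using finite_subset by blast
    qed
    have km: "k \<le> m" using val unfolding valid_instance_def by auto
    have "set_score f m n A {..<k} = (\<Sum>i\<in>{..<k}. F 0)"
      unfolding set_score_def Ff by (rule sum.cong[OF refl], rule Fk) auto
    then have "set_score f m n A {..<k} = real k * F 0" by simp
    moreover have "set_score f m n A {..<k} \<in> {set_score f m n A S | S. S \<subseteq> {..<m} \<and> card S = k}"
      using km by auto
    ultimately show "real k * F 0 \<le> opt_score f m n A k"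
      unfolding opt_score_def using fin Max_ge by auto
  qed
  have JRbound: "\<And>S. satisfies_JR m n A k S \<Longrightarrow> set_score f m n A S \<le> F 0"
  proof -
    fix S assume S: "satisfies_JR m n A k S"
    have Sm: "S \<subseteq> {..<m}" and cS: "card S = k" using S unfolding satisfies_JR_def by auto
    have fS: "finite S" using Sm finite_subset by blast
    have blk: "{k..<m} \<subseteq> S"
    proof
      fix i assume i: "i \<in> {k..<m}"
      define j where "j = i - k"
      have j: "j < k - 1" "i = k + j" using i unfolding j_def m_def by auto
      define B where "B = {\<gamma> + j*\<gamma> ..< \<gamma> + (Suc j)*\<gamma>}"
      have AB: "\<And>u. u \<in> B \<Longrightarrow> A u = {k + j}"
        using blk_div[OF g0] unfolding B_def A_def gA_def by auto
      have "\<gamma> + (Suc j)*\<gamma> = (Suc (Suc j)) * \<gamma>" by simp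
      also have "\<dots> \<le> k * \<gamma>" using j(1) by (intro mult_right_mono) auto
      finally have Bn: "B \<subseteq> {..<n}" unfolding B_def n_def by auto
      have Bne: "\<gamma> + j*\<gamma> \<in> B" unfolding B_def using g0 by simp
      have "(\<Inter>u\<in>B. A u) = {k+j}" using AB Bne by auto
      then have coh: "cohesive n A B" unfolding cohesive_def using Bn by auto
      have cB: "card B = \<gamma>" unfolding B_def by simp
      have "real n / real k = real \<gamma>" unfolding n_def using k by simp
      then have "represents A S B" using S coh cB unfolding satisfies_JR_def by auto
      then obtain u where "u \<in> B" "A u \<inter> S \<noteq> {}" unfolding represents_def by auto
      then show "i \<in> S" using AB j(2) by auto
    qed
    have sp: "S = (S \<inter> {..<k}) \<union> {k..<m}" using blk Sm by auto
    have "card S = card (S \<inter> {..<k}) + card {k..<m}"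
      by (subst sp, rule card_Un_disjoint) auto
    then have c1: "card (S \<inter> {..<k}) \<le> 1" using cS unfolding m_def by simp
    have "set_score f m n A S = (\<Sum>i\<in>S \<inter> {..<k}. F i) + (\<Sum>i\<in>{k..<m}. F i)"
      unfolding set_score_def Ff by (subst sp, rule sum.union_disjoint) auto
    also have "(\<Sum>i\<in>{k..<m}. F i) = 0" using Fbig by simp
    also have "(\<Sum>i\<in>S \<inter> {..<k}. F i) = (\<Sum>i\<in>S \<inter> {..<k}. F 0)"
      by (rule sum.cong[OF refl], rule Fk) auto
    also have "(\<Sum>i\<in>S \<inter> {..<k}. F 0) = real (card (S \<inter> {..<k})) * F 0"
      by simp
    also have "\<dots> \<le> 1 * F 0" using c1 F0 by (intro mult_right_mono) auto
    finally show "set_score f m n A S \<le> F 0" by simp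
  qed
  have optJR: "opt_JR_score f m n A k = F 0"
  proof (rule antisym)
    have "opt_JR_score f m n A k \<ge> Max (f m n A ` {..<m})"
      using optJR_ge[OF DA_nonneg[OF g0] DA_appdep[OF g0] val k] pos unfolding f_def F_def by auto
    then show "opt_JR_score f m n A k \<ge> F 0" using MaxF Ff by simp
    have "0 < n" "0 \<in> A 0" using k g0 unfolding n_def A_def gA_def by auto
    then obtain S0 where "satisfies_JR m n A k S0" using exists_JR[OF val k] by blast
    then have ne: "{set_score f m n A S | S. satisfies_JR m n A k S} \<noteq> {}" by blast
    show "opt_JR_score f m n A k \<le> F 0" unfolding opt_JR_score_def
      using JRbound fin_JR ne by (subst Max_le_iff) auto
  qed
  have P: "price_of_JR f m n A k = real k" unfolding price_of_JR_def opt optJR using F0 by simp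
  show ?thesis unfolding DA_prices_def mem_Collect_eq
    apply (rule exI[of _ m], rule exI[of _ n], rule exI[of _ A], rule exI[of _ grp])
    using P val gp pos unfolding F_def f_def by simp
qed

theorem theorem1:
  fixes k :: nat
  assumes "k \<ge> 1"
  shows "(\<forall>f m n A. nonneg_rule f \<and> approval_dependent f \<and> valid_instance m n A k
            \<and> (\<exists>i<m. f m n A i > 0) \<longrightarrow> price_of_JR f m n A k \<le> real k)
       \<and> (\<forall>\<gamma>::nat. \<gamma> > 1 \<longrightarrow> real k \<in> DA_prices k \<gamma> \<and> (\<forall>p\<in>DA_prices k \<gamma>. p \<le> real k))"
proof (intro conjI allI impI ballI)
  fix f m n A
  assume "nonneg_rule f \<and> approval_dependent f \<and> valid_instance m n A k \<and> (\<exists>i<m. f m n A i > 0)"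
  then show "price_of_JR f m n A k \<le> real k" using part1 assms by blast
next
  fix \<gamma> :: nat assume "\<gamma> > 1"
  then show "real k \<in> DA_prices k \<gamma>" using part2_instance assms by blast
next
  fix \<gamma> :: nat and p assume g: "\<gamma> > 1" and p: "p \<in> DA_prices k \<gamma>"
  then obtain m n A grp where "p = price_of_JR (f_DA \<gamma> grp) m n A k"
    "valid_instance m n A k" "(\<exists>i<m. f_DA \<gamma> grp m n A i > 0)"
    unfolding DA_prices_def by blast
  moreover have "\<gamma> > 0" using g by simp
  ultimately show "p \<le> real k" using part1[OF DA_nonneg DA_appdep _ assms] by blast
qed

end
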